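(* Let $G=G_{\mathbf E}$ be a multi-GGS group which is not the constant GGS group. Then an element of $\overline D$ normalises $G$ if and only if it normalises $B$, i.e.\ $N_{\overline D}(G)=N_{\overline D}(B)$.
   Context: Let $p$ be an odd prime and $X=\{0,1,\dots,p-1\}$, identified with $\mathbb F_p$. $X^*$ is the $p$-regular rooted tree of finite words over $X$; $\mathrm{Aut}(X^* )$ acts on the right. Sections $g|_v$ are defined by $(vw)^g=v^g\,w^{g|_v}$. $\mathrm{Stab}(n)$ is the stabiliser of all words of length $n$ and $\psi_n\colon\mathrm{Stab}(n)\to\mathrm{Aut}(X^* )^{p^n}$, $g\mapsto(g|_v)_{v\in X^n}$, is an isomorphism. For $\tau\in\mathrm{Sym}(X)$, $\mathrm{rt}(\tau)$ is the rooted automorphism acting as $\tau$ on the first letter and trivially on the rest. Let $a=\mathrm{rt}(\sigma)$ with $\sigma=(0\,1\,\cdots\,p-1)$. Let $\Delta=\{x\mapsto mx\mid m\in\mathbb F_p^\times\}\le\mathrm{Sym}(X)$ and $D=\mathrm{rt}(\Delta)$. Let $\mathbf E\le\mathbb F_p^{p-1}$ be a subspace of dimension $r\ge1$; $E$ is the $r\times(p-1)$ matrix whose rows form a fixed basis of $\mathbf E$, with columns $\mathbf e_1,\dots,\mathbf e_{p-1}$. For $\mathbf n\in\mathbb F_p^r$, $b^{\mathbf n}\in\mathrm{Stab}(1)$ is the unique automorphism with $\psi_1(b^{\mathbf n})=(b^{\mathbf n},a^{\mathbf n\cdot\mathbf e_1},\dots,a^{\mathbf n\cdot\mathbf e_{p-1}})$;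 $B=\{b^{\mathbf n}\}$. $G=G_{\mathbf E}$ is generated by $a$ and $B$; it is the constant GGS group if $\mathbf E=\{(\lambda,\dots,\lambda)\mid\lambda\in\mathbb F_p\}$. $\kappa_n(g)=\psi_n^{-1}(g,\dots,g)$ ($\kappa_0(g)=g$). The diagonal closure of $D$ is $\overline D=\{\prod_{i=0}^\infty\kappa_i(d_i)\mid d_i\in D\}$, the infinite product converging in the topology given by the layer stabilisers. *)

theory Defs
  imports "HOL-Computational_Algebra.Primes" "HOL-Algebra.Group" "HOL-Algebra.Generated_Groups"
begin

text \<open>Letters are naturals below p (identified with F_p); words are lists of letters.
  An automorphism of the tree is a length- and prefix-preserving bijection of the set of
  words, extended by the identity outside the set of words (to make it unique as a function).\<close>

definition words :: "nat \<Rightarrow> nat list set" where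
  "words p = {w. set w \<subseteq> {..<p}}"

definition tree_aut :: "nat \<Rightarrow> (nat list \<Rightarrow> nat list) \<Rightarrow> bool" where
  "tree_aut p f \<longleftrightarrow> bij_betw f (words p) (words p)
     \<and> (\<forall>w\<in>words p. length (f w) = length w)
     \<and> (\<forall>v w. v @ w \<in> words p \<longrightarrow> take (length v) (f (v @ w)) = f v)
     \<and> (\<forall>w. w \<notin> words p \<longrightarrow> f w = w)"

text \<open>Right action: the product g h means first g, then h, i.e. x^(gh) = (x^g)^h.\<close>
definition AutT :: "nat \<Rightarrow> (nat list \<Rightarrow> nat list) monoid" where
  "AutT p = \<lparr>carrier = {f. tree_aut p f}, monoid.mult = (\<lambda>f g. g \<circ> f), one = id\<rparr>"

definition rt :: "nat \<Rightarrow> (nat \<Rightarrow> nat) \<Rightarrow> nat list \<Rightarrow> nat list" where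
  "rt p \<tau> w = (if w \<in> words p then (case w of [] \<Rightarrow> [] | x # v \<Rightarrow> \<tau> x # v) else w)"

definition gen_a :: "nat \<Rightarrow> nat list \<Rightarrow> nat list" where
  "gen_a p = rt p (\<lambda>x. (x + 1) mod p)"

definition apow :: "nat \<Rightarrow> nat \<Rightarrow> nat list \<Rightarrow> nat list" where
  "apow p k = rt p (\<lambda>x. (x + k) mod p)"

text \<open>The automorphism with psi_1 = (itself, a^(e 1), ..., a^(e (p-1))).\<close>
fun bgen :: "nat \<Rightarrow> (nat \<Rightarrow> nat) \<Rightarrow> nat list \<Rightarrow> nat list" where
  "bgen p e [] = []"
| "bgen p e (x # w) = (if x = 0 then 0 # bgen p e w else x # apow p (e x) w)"

definition bauto :: "nat \<Rightarrow> (nat \<Rightarrow> nat) \<Rightarrow> nat list \<Rightarrow> nat list" where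
  "bauto p e w = (if w \<in> words p then bgen p e w else w)"

definition basis_matrix :: "nat \<Rightarrow> nat \<Rightarrow> (nat \<Rightarrow> nat \<Rightarrow> nat) \<Rightarrow> bool" where
  "basis_matrix p r E \<longleftrightarrow>
     (\<forall>i<r. \<forall>j\<in>{1..<p}. E i j < p)
     \<and> (\<forall>c::nat\<Rightarrow>nat. (\<forall>i<r. c i < p) \<longrightarrow>
          (\<forall>j\<in>{1..<p}. (\<Sum>i<r. c i * E i j) mod p = 0) \<longrightarrow> (\<forall>i<r. c i = 0))"

definition row_space :: "nat \<Rightarrow> nat \<Rightarrow> (nat \<Rightarrow> nat \<Rightarrow> nat) \<Rightarrow> (nat \<Rightarrow> nat) set" where
  "row_space p r E = {v. \<exists>c::nat\<Rightarrow>nat. (\<forall>i<r. c i < p) \<and>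
       (\<forall>j. v j = (if j \<in> {1..<p} then (\<Sum>i<r. c i * E i j) mod p else 0))}"

definition const_space :: "nat \<Rightarrow> (nat \<Rightarrow> nat) set" where
  "const_space p = {v. \<exists>c<p. \<forall>j. v j = (if j \<in> {1..<p} then c else 0)}"

definition bvec :: "nat \<Rightarrow> nat \<Rightarrow> (nat \<Rightarrow> nat \<Rightarrow> nat) \<Rightarrow> (nat \<Rightarrow> nat) \<Rightarrow> nat list \<Rightarrow> nat list" where
  "bvec p r E n = bauto p (\<lambda>j. (\<Sum>i<r. n i * E i j) mod p)"

definition Bset :: "nat \<Rightarrow> nat \<Rightarrow> (nat \<Rightarrow> nat \<Rightarrow> nat) \<Rightarrow> (nat list \<Rightarrow> nat list) set" where
  "Bset p r E = {bvec p r E n | n. \<forall>i<r. n i < p}"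

definition GGS :: "nat \<Rightarrow> nat \<Rightarrow> (nat \<Rightarrow> nat \<Rightarrow> nat) \<Rightarrow> (nat list \<Rightarrow> nat list) set" where
  "GGS p r E = generate (AutT p) (insert (gen_a p) (Bset p r E))"

text \<open>kappa_n(g) = psi_n^{-1}(g,...,g): acts as g below every vertex of level n.\<close>
definition kappa :: "nat \<Rightarrow> nat \<Rightarrow> (nat list \<Rightarrow> nat list) \<Rightarrow> nat list \<Rightarrow> nat list" where
  "kappa p n g w = (if w \<in> words p \<and> n \<le> length w then take n w @ g (drop n w) else w)"

text \<open>D = rt(Delta), Delta = {x -> m x | m in F_p^*}; the element rt(x -> m x).\<close>
definition dmul :: "nat \<Rightarrow> nat \<Rightarrow> nat list \<Rightarrow> nat list" where
  "dmul p m = rt p (\<lambda>x. (m * x) mod p)"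

text \<open>Partial products kappa_0(d_0) kappa_1(d_1) ... kappa_(N-1)(d_(N-1)) (right action:
  leftmost factor acts first), with d_i = rt(x -> m_i x).\<close>
fun partprod :: "nat \<Rightarrow> (nat \<Rightarrow> nat) \<Rightarrow> nat \<Rightarrow> nat list \<Rightarrow> nat list" where
  "partprod p m 0 = id"
| "partprod p m (Suc N) = kappa p N (dmul p (m N)) \<circ> partprod p m N"

text \<open>Convergence in the topology given by the level stabilisers: for every level n,
  the partial products eventually agree with g on all words of length at most n.\<close>
definition Dbar :: "nat \<Rightarrow> (nat list \<Rightarrow> nat list) set" where
  "Dbar p = {g. tree_aut p g \<and> (\<exists>m. (\<forall>i. m i \<in> {1..<p}) \<and>
      (\<forall>n. \<exists>N. \<forall>N'\<ge>N. \<forall>w\<in>words p. length w \<le> n \<longrightarrow> partprod p m N' w = g w))}"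

definition normalises :: "nat \<Rightarrow> (nat list \<Rightarrow> nat list) \<Rightarrow> (nat list \<Rightarrow> nat list) set \<Rightarrow> bool" where
  "normalises p d H \<longleftrightarrow> d \<in> carrier (AutT p) \<and>
     {inv\<^bsub>AutT p\<^esub> d \<otimes>\<^bsub>AutT p\<^esub> h \<otimes>\<^bsub>AutT p\<^esub> d | h. h \<in> H} = H"

end

theory Submission
  imports Defs
begin


lemma words_Nil[simp]: "[] \<in> words p" by (simp add: words_def)
lemma words_Cons[simp]: "x # w \<in> words p \<longleftrightarrow> x < p \<and> w \<in> words p"
  by (auto simp: words_def)
lemma words_append[simp]: "v @ w \<in> words p \<longleftrightarrow> v \<in> words p \<and> w \<in> words p"
  by (auto simp: words_def)
lemma words_take[intro]: "w \<in> words p \<Longrightarrow> take i w \<in> words p"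
  by (auto simp: words_def dest: in_set_takeD)
lemma words_drop[intro]: "w \<in> words p \<Longrightarrow> drop i w \<in> words p"
  by (auto simp: words_def dest: in_set_dropD)

lemma tree_aut_take:
  assumes "tree_aut p f" "w \<in> words p" shows "take i (f w) = f (take i w)"
proof (cases "i \<le> length w")
  case True
  have "w = take i w @ drop i w" by simp
  with assms have "take (length (take i w)) (f (take i w @ drop i w)) = f (take i w)"
    unfolding tree_aut_def by (metis append_take_drop_id)
  with True show ?thesis by simp
next
  case False
  with assms show ?thesis unfolding tree_aut_def by auto
qed

lemma tree_aut_words: "tree_aut p f \<Longrightarrow> w \<in> words p \<Longrightarrow> f w \<in> words p"
  unfolding tree_aut_def by (meson bij_betwE)
lemma tree_aut_length: "tree_aut p f \<Longrightarrow> w \<in> words p \<Longrightarrow> length (f w) = length w"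
  unfolding tree_aut_def by blast
lemma tree_aut_out: "tree_aut p f \<Longrightarrow> w \<notin> words p \<Longrightarrow> f w = w"
  unfolding tree_aut_def by blast

lemma tree_autI:
  assumes w: "\<And>w. w \<in> words p \<Longrightarrow> f w \<in> words p \<and> length (f w) = length w"
    and t: "\<And>w i. w \<in> words p \<Longrightarrow> take i (f w) = f (take i w)"
    and o: "\<And>w. w \<notin> words p \<Longrightarrow> f w = w"
    and g: "\<And>w. w \<in> words p \<Longrightarrow> g w \<in> words p \<and> f (g w) = w \<and> g (f w) = w"
  shows "tree_aut p f"
  unfolding tree_aut_def
proof (intro conjI ballI allI impI)
  show "bij_betw f (words p) (words p)"
    by (rule bij_betw_byWitness[where f'=g]) (use w g in auto)
  fix v w assume "v @ w \<in> words p"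
  then show "take (length v) (f (v @ w)) = f v" using t by simp
qed (use w o in auto)

definition tinv :: "nat \<Rightarrow> (nat list \<Rightarrow> nat list) \<Rightarrow> nat list \<Rightarrow> nat list" where
  "tinv p f w = (if w \<in> words p then inv_into (words p) f w else w)"

lemma tinv_props:
  assumes "tree_aut p f" "w \<in> words p"
  shows "tinv p f w \<in> words p" "f (tinv p f w) = w" "tinv p f (f w) = w"
proof -
  have b: "bij_betw f (words p) (words p)" using assms unfolding tree_aut_def by blast
  show "tinv p f w \<in> words p" using assms b unfolding tinv_def
    by (simp add: bij_betw_def inv_into_into)
  show "f (tinv p f w) = w" using assms b unfolding tinv_def
    by (simp add: bij_betw_def f_inv_into_f)
  show "tinv p f (f w) = w" using assms b tree_aut_words[OF assms(1)] unfolding tinv_def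
    by (simp add: bij_betw_def)
qed

lemma tinv_tree_aut: assumes "tree_aut p f" shows "tree_aut p (tinv p f)"
proof (rule tree_autI[where g=f])
  fix w assume w: "w \<in> words p"
  show "tinv p f w \<in> words p \<and> length (tinv p f w) = length w"
    using tinv_props[OF assms w] tree_aut_length[OF assms] by metis
  fix i
  let ?z = "tinv p f w"
  have z: "?z \<in> words p" "f ?z = w" using tinv_props[OF assms w] by auto
  have "f (take i ?z) = take i w" using tree_aut_take[OF assms z(1)] z by simp
  then have "tinv p f (take i w) = take i ?z"
    using tinv_props(3)[OF assms words_take[OF z(1)], of i] by simp
  then show "take i (tinv p f w) = tinv p f (take i w)" by simp
next
  fix w assume "w \<notin> words p" then show "tinv p f w = w" by (simp add: tinv_def)
next
  fix w assume w: "w \<in> words p"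
  show "f w \<in> words p \<and> tinv p f (f w) = w \<and> f (tinv p f w) = w"
    using tinv_props[OF assms w] tree_aut_words[OF assms w] by auto
qed

lemma tree_aut_comp:
  assumes f: "tree_aut p f" and g: "tree_aut p g" shows "tree_aut p (g \<circ> f)"
proof (rule tree_autI[where g="tinv p f \<circ> tinv p g"])
  fix w assume w: "w \<in> words p"
  show "(g \<circ> f) w \<in> words p \<and> length ((g \<circ> f) w) = length w"
    using w f g by (simp add: tree_aut_words tree_aut_length)
  show "(tinv p f \<circ> tinv p g) w \<in> words p \<and> (g \<circ> f) ((tinv p f \<circ> tinv p g) w) = w
        \<and> (tinv p f \<circ> tinv p g) ((g \<circ> f) w) = w"
    using w f g by (simp add: tinv_props tree_aut_words)
  fix i show "take i ((g \<circ> f) w) = (g \<circ> f) (take i w)"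
    using w f g by (simp add: tree_aut_take tree_aut_words)
next
  fix w assume "w \<notin> words p" then show "(g \<circ> f) w = w" using f g by (simp add: tree_aut_out)
qed

lemma tree_aut_id: "tree_aut p id"
  by (rule tree_autI[where g=id]) auto

lemma AutT_group: "group (AutT p)"
proof (rule groupI)
  show "\<And>x y. x \<in> carrier (AutT p) \<Longrightarrow> y \<in> carrier (AutT p) \<Longrightarrow> x \<otimes>\<^bsub>AutT p\<^esub> y \<in> carrier (AutT p)"
    by (simp add: AutT_def tree_aut_comp)
  show "\<one>\<^bsub>AutT p\<^esub> \<in> carrier (AutT p)" by (simp add: AutT_def tree_aut_id)
  show "\<And>x y z. x \<in> carrier (AutT p) \<Longrightarrow> y \<in> carrier (AutT p) \<Longrightarrow> z \<in> carrier (AutT p) \<Longrightarrow>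
      x \<otimes>\<^bsub>AutT p\<^esub> y \<otimes>\<^bsub>AutT p\<^esub> z = x \<otimes>\<^bsub>AutT p\<^esub> (y \<otimes>\<^bsub>AutT p\<^esub> z)"
    by (simp add: AutT_def comp_assoc)
  show "\<And>x. x \<in> carrier (AutT p) \<Longrightarrow> \<one>\<^bsub>AutT p\<^esub> \<otimes>\<^bsub>AutT p\<^esub> x = x"
    by (simp add: AutT_def)
  fix x assume x: "x \<in> carrier (AutT p)"
  then have tx: "tree_aut p x" by (simp add: AutT_def)
  have "x \<circ> tinv p x = id"
  proof
    fix w show "(x \<circ> tinv p x) w = id w"
    proof (cases "w \<in> words p")
      case True then show ?thesis using tinv_props[OF tx True] by simp
    qed (simp add: tinv_def tree_aut_out[OF tx])
  qed
  then show "\<exists>y\<in>carrier (AutT p). y \<otimes>\<^bsub>AutT p\<^esub> x = \<one>\<^bsub>AutT p\<^esub>"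
    using tinv_tree_aut[OF tx] by (auto simp: AutT_def)
qed

lemma carrier_AutT[simp]: "f \<in> carrier (AutT p) \<longleftrightarrow> tree_aut p f" by (simp add: AutT_def)
lemma mult_AutT[simp]: "f \<otimes>\<^bsub>AutT p\<^esub> g = g \<circ> f" by (simp add: AutT_def)
lemma one_AutT[simp]: "\<one>\<^bsub>AutT p\<^esub> = id" by (simp add: AutT_def)

lemma tree_aut_ext:
  assumes "tree_aut p f" "tree_aut p g" "\<And>w. w \<in> words p \<Longrightarrow> f w = g w" shows "f = g"
proof
  fix w show "f w = g w" using assms by (cases "w \<in> words p") (auto simp: tree_aut_out)
qed

lemma inv_AutT:
  assumes "tree_aut p f" "tree_aut p g" "\<And>w. w \<in> words p \<Longrightarrow> g (f w) = w"
  shows "inv\<^bsub>AutT p\<^esub> f = g"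
proof (rule group.inv_equality[OF AutT_group])
  show "g \<otimes>\<^bsub>AutT p\<^esub> f = \<one>\<^bsub>AutT p\<^esub>"
  proof -
    have "f \<circ> g = id"
    proof (rule tree_aut_ext[OF tree_aut_comp[OF assms(2,1)] tree_aut_id])
      fix w assume w: "w \<in> words p"
      have "g w \<in> words p" using assms(2) w by (rule tree_aut_words)
      obtain z where z: "z \<in> words p" "f z = w"
        using assms(1) w unfolding tree_aut_def by (metis bij_betw_iff_bijections)
      then show "(f \<circ> g) w = id w" using assms(3) by auto
    qed
    then show ?thesis by simp
  qed
qed (use assms in auto)


declare words_take[simp] words_drop[simp]


lemma rt_Nil[simp]: "rt p \<tau> [] = []" by (simp add: rt_def)
lemma rt_Cons[simp]: "x # w \<in> words p \<Longrightarrow> rt p \<tau> (x # w) = \<tau> x # w" by (simp add: rt_def)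
lemma rt_out: "w \<notin> words p \<Longrightarrow> rt p \<tau> w = w" by (simp add: rt_def)

lemma apow_Cons[simp]: "x < p \<Longrightarrow> w \<in> words p \<Longrightarrow> apow p k (x # w) = ((x + k) mod p) # w"
  by (simp add: apow_def)
lemma apow_Nil[simp]: "apow p k [] = []" by (simp add: apow_def)
lemma apow_out: "w \<notin> words p \<Longrightarrow> apow p k w = w" by (simp add: apow_def rt_out)

lemma apow_words: "w \<in> words p \<Longrightarrow> apow p k w \<in> words p \<and> length (apow p k w) = length w"
  by (cases w) (auto simp: apow_def)

lemma apow_in_words[simp]: "w \<in> words p \<Longrightarrow> apow p k w \<in> words p" by (simp add: apow_words)
lemma apow_length[simp]: "w \<in> words p \<Longrightarrow> length (apow p k w) = length w" by (simp add: apow_words)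

lemma apow_apow: "w \<in> words p \<Longrightarrow> apow p k (apow p k' w) = apow p (k' + k) w"
  by (cases w) (auto simp: mod_add_left_eq add.assoc)

lemma apow_mod: assumes "w \<in> words p" "k mod p = k' mod p" shows "apow p k w = apow p k' w"
proof (cases w)
  case (Cons x v)
  have "(x + k) mod p = (x + k') mod p" using assms(2) by (metis mod_add_right_eq)
  then show ?thesis using assms Cons by simp
qed simp

lemma apow_zero: assumes "w \<in> words p" "k mod p = 0" shows "apow p k w = w"
proof (cases w)
  case (Cons x v)
  have "(x + k) mod p = x" using assms Cons by (metis add.right_neutral mod_add_right_eq mod_less words_Cons)
  then show ?thesis using assms Cons by simp
qed simp

lemma apow_take: "w \<in> words p \<Longrightarrow> take i (apow p k w) = apow p k (take i w)"
  by (cases w; cases i) auto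

lemma mod_compl: assumes "(p::nat) > 0" shows "(p - k mod p + k) mod p = 0"
proof -
  have "(p - k mod p + k) mod p = (p - k mod p + k mod p) mod p" by (simp add: mod_add_right_eq)
  also have "\<dots> = 0" using assms by (simp add: less_imp_le)
  finally show ?thesis .
qed

lemma tree_aut_apow: assumes "p > 0" shows "tree_aut p (apow p k)"
proof (rule tree_autI[where g="apow p (p - k mod p)"])
  fix w assume w: "w \<in> words p"
  have e: "(p - k mod p + k) mod p = 0" "(k + (p - k mod p)) mod p = 0"
    using mod_compl[OF assms, of k] by (simp_all add: add.commute)
  show "apow p (p - k mod p) w \<in> words p \<and> apow p k (apow p (p - k mod p) w) = w \<and>
        apow p (p - k mod p) (apow p k w) = w"
    using w e by (simp add: apow_words apow_apow apow_zero)
qed (auto simp: apow_words apow_take apow_out)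

lemma gen_a_apow: "gen_a p = apow p 1" by (simp add: gen_a_def apow_def)

lemma bauto_Cons: "x # w \<in> words p \<Longrightarrow>
   bauto p e (x # w) = (if x = 0 then 0 # bauto p e w else x # apow p (e x) w)"
  by (simp add: bauto_def)
lemma bauto_Nil[simp]: "bauto p e [] = []" by (simp add: bauto_def)
lemma bauto_out: "w \<notin> words p \<Longrightarrow> bauto p e w = w" by (simp add: bauto_def)

lemma bauto_words: "w \<in> words p \<Longrightarrow> bauto p e w \<in> words p \<and> length (bauto p e w) = length w"
  by (induction w) (auto simp: bauto_Cons apow_words)

lemma bauto_in_words[simp]: "w \<in> words p \<Longrightarrow> bauto p e w \<in> words p" by (simp add: bauto_words)
lemma bauto_length[simp]: "w \<in> words p \<Longrightarrow> length (bauto p e w) = length w" by (simp add: bauto_words)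

lemma bauto_take: "w \<in> words p \<Longrightarrow> take i (bauto p e w) = bauto p e (take i w)"
proof (induction w arbitrary: i)
  case (Cons x w) then show ?case by (cases i) (auto simp: bauto_Cons apow_take)
qed simp

lemma bauto_bauto: "w \<in> words p \<Longrightarrow> (\<And>x. x \<in> {1..<p} \<Longrightarrow> (e x + e' x) mod p = 0)
   \<Longrightarrow> bauto p e' (bauto p e w) = w"
proof (induction w)
  case (Cons x w)
  then show ?case
    by (auto simp: bauto_Cons apow_words apow_apow apow_zero add.commute)
qed simp

lemma tree_aut_bauto: assumes "p > 0" shows "tree_aut p (bauto p e)"
proof (rule tree_autI[where g="bauto p (\<lambda>x. p - e x mod p)"])
  fix w assume w: "w \<in> words p"
  have e: "(p - e x mod p + e x) mod p = 0" "(e x + (p - e x mod p)) mod p = 0" for x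
    using mod_compl[OF assms, of "e x"] by (simp_all add: add.commute)
  show "bauto p (\<lambda>x. p - e x mod p) w \<in> words p \<and> bauto p e (bauto p (\<lambda>x. p - e x mod p) w) = w
        \<and> bauto p (\<lambda>x. p - e x mod p) (bauto p e w) = w"
    using w e by (simp add: bauto_words bauto_bauto)
qed (auto simp: bauto_words bauto_take bauto_out)

fun dfun :: "nat \<Rightarrow> (nat \<Rightarrow> nat) \<Rightarrow> nat list \<Rightarrow> nat list" where
  "dfun p m [] = []"
| "dfun p m (x # w) = ((m 0 * x) mod p) # dfun p (\<lambda>i. m (Suc i)) w"

definition dext :: "nat \<Rightarrow> (nat \<Rightarrow> nat) \<Rightarrow> nat list \<Rightarrow> nat list" where
  "dext p m w = (if w \<in> words p then dfun p m w else w)"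

lemma dfun_words: "p > 0 \<Longrightarrow> w \<in> words p \<Longrightarrow> dfun p m w \<in> words p \<and> length (dfun p m w) = length w"
  by (induction w arbitrary: m) auto

lemma dfun_take: "take i (dfun p m w) = dfun p m (take i w)"
  by (induction w arbitrary: m i) (auto simp: take_Cons split: nat.split)

definition invpair :: "nat \<Rightarrow> (nat \<Rightarrow> nat) \<Rightarrow> (nat \<Rightarrow> nat) \<Rightarrow> bool" where
  "invpair p m m' \<longleftrightarrow> (\<forall>i. (m i * m' i) mod p = 1)"

lemma invpair_sym: "invpair p m m' \<Longrightarrow> invpair p m' m"
  by (simp add: invpair_def mult.commute)
lemma invpair_Suc: "invpair p m m' \<Longrightarrow> invpair p (\<lambda>i. m (Suc i)) (\<lambda>i. m' (Suc i))"
  by (simp add: invpair_def)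

lemma mulinv_cancel: assumes "(a * b) mod p = (1::nat)" "x < p"
  shows "(b * ((a * x) mod p)) mod p = x"
proof -
  have "(b * ((a * x) mod p)) mod p = (b * (a * x)) mod p" by (rule mod_mult_right_eq)
  also have "\<dots> = ((a * b) * x) mod p" by (simp add: ac_simps)
  also have "\<dots> = (((a * b) mod p) * x) mod p" by (simp add: mod_mult_left_eq)
  also have "\<dots> = x" using assms by simp
  finally show ?thesis .
qed

lemma dfun_dfun: "invpair p m m' \<Longrightarrow> w \<in> words p \<Longrightarrow> dfun p m' (dfun p m w) = w"
proof (induction w arbitrary: m m')
  case (Cons x w)
  then have "(m 0 * m' 0) mod p = 1" by (simp add: invpair_def)
  then show ?case using Cons by (simp add: mulinv_cancel invpair_Suc)
qed simp

lemma tree_aut_dext: assumes "p > 0" "invpair p m m'" shows "tree_aut p (dext p m)"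
proof (rule tree_autI[where g="dext p m'"])
  fix w assume w: "w \<in> words p"
  show "dext p m' w \<in> words p \<and> dext p m (dext p m' w) = w \<and> dext p m' (dext p m w) = w"
    using w assms invpair_sym[OF assms(2)] by (simp add: dext_def dfun_words dfun_dfun)
qed (use assms in \<open>auto simp: dext_def dfun_words dfun_take\<close>)



lemma shift_shift: assumes "(p::nat) > 0" "x < p" "(a + b) mod p = 0"
  shows "((x + a) mod p + b) mod p = x"
proof -
  have "((x + a) mod p + b) mod p = (x + (a + b)) mod p" by (simp add: mod_add_left_eq add.assoc)
  also have "\<dots> = (x + (a + b) mod p) mod p" by (simp add: mod_add_right_eq)
  finally show ?thesis using assms by simp
qed

lemma sum_shift: assumes "(p::nat) > 0"
  shows "(\<Sum>x<p. f ((x + k) mod p)) = (\<Sum>x<p. (f x :: nat))"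
proof -
  have e1: "(k + (p - k mod p)) mod p = 0" "(p - k mod p + k) mod p = 0"
    using mod_compl[OF assms, of k] by (simp_all add: add.commute)
  have "bij_betw (\<lambda>x. (x + k) mod p) {..<p} {..<p}"
  proof (rule bij_betw_byWitness[where f'="\<lambda>x. (x + (p - k mod p)) mod p"])
    show "\<forall>a\<in>{..<p}. ((a + k) mod p + (p - k mod p)) mod p = a"
      using shift_shift[OF assms _ e1(1)] by blast
    show "\<forall>a\<in>{..<p}. ((a + (p - k mod p)) mod p + k) mod p = a"
      using shift_shift[OF assms _ e1(2)] by blast
  qed (use assms in auto)
  then show ?thesis by (rule sum.reindex_bij_betw)
qed

locale ggs =
  fixes p r :: nat and E :: "nat \<Rightarrow> nat \<Rightarrow> nat"
  assumes p_prime: "prime p" and basis: "basis_matrix p r E"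
begin

lemma p_gt1: "p > 1" using p_prime prime_gt_1_nat by blast
lemma p_pos: "p > 0" using p_gt1 by simp

definition ev :: "(nat \<Rightarrow> nat) \<Rightarrow> nat \<Rightarrow> nat" where
  "ev n j = (\<Sum>i<r. n i * E i j)"

definition ehat :: "(nat \<Rightarrow> nat) \<Rightarrow> nat \<Rightarrow> nat" where
  "ehat n j = (if j = 0 then 0 else ev n j)"

lemma bvec_eq: "bvec p r E n = bauto p (\<lambda>j. ev n j mod p)"
  by (simp add: bvec_def ev_def)

lemma ev_add: "ev (\<lambda>i. a i + b i) j = ev a j + ev b j"
  by (simp add: ev_def sum.distrib algebra_simps)
lemma ev_zero[simp]: "ev (\<lambda>i. 0) j = 0" by (simp add: ev_def)

lemma ev_cong: assumes "\<And>i. i < r \<Longrightarrow> a i mod p = b i mod p"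
  shows "ev a j mod p = ev b j mod p"
proof -
  have 1: "ev a j mod p = (\<Sum>i<r. a i * E i j mod p) mod p" unfolding ev_def by (rule mod_sum_eq[symmetric])
  have 2: "ev b j mod p = (\<Sum>i<r. b i * E i j mod p) mod p" unfolding ev_def by (rule mod_sum_eq[symmetric])
  have "(\<Sum>i<r. a i * E i j mod p) = (\<Sum>i<r. b i * E i j mod p)"
  proof (rule sum.cong)
    fix i assume "i \<in> {..<r}"
    then show "a i * E i j mod p = b i * E i j mod p" using assms by (metis lessThan_iff mod_mult_left_eq)
  qed simp
  then show ?thesis using 1 2 by simp
qed

lemma ehat_cong: assumes "\<And>i. i < r \<Longrightarrow> a i mod p = b i mod p"
  shows "ehat a j mod p = ehat b j mod p"
  using ev_cong[OF assms] by (simp add: ehat_def)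

fun lett :: "nat + (nat \<Rightarrow> nat) \<Rightarrow> nat list \<Rightarrow> nat list" where
  "lett (Inl k) = apow p k"
| "lett (Inr n) = bvec p r E n"

fun evalw :: "(nat + (nat \<Rightarrow> nat)) list \<Rightarrow> nat list \<Rightarrow> nat list" where
  "evalw [] = id"
| "evalw (l # ls) = evalw ls \<circ> lett l"

fun asum :: "(nat + (nat \<Rightarrow> nat)) list \<Rightarrow> nat" where
  "asum [] = 0"
| "asum (Inl k # ls) = k + asum ls"
| "asum (Inr n # ls) = asum ls"

fun bsum :: "(nat + (nat \<Rightarrow> nat)) list \<Rightarrow> nat \<Rightarrow> nat" where
  "bsum [] i = 0"
| "bsum (Inl k # ls) i = bsum ls i"
| "bsum (Inr n # ls) i = n i + bsum ls i"

fun secw :: "nat \<Rightarrow> (nat + (nat \<Rightarrow> nat)) list \<Rightarrow> (nat + (nat \<Rightarrow> nat)) list" where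
  "secw y [] = []"
| "secw y (Inl k # ls) = secw ((y + k) mod p) ls"
| "secw y (Inr n # ls) = (if y = 0 then Inr n else Inl (ev n y)) # secw y ls"

lemma tree_aut_lett: "tree_aut p (lett l)"
  by (cases l) (simp_all add: tree_aut_apow p_pos bvec_def tree_aut_bauto)

lemma tree_aut_evalw: "tree_aut p (evalw ws)"
proof (induction ws)
  case Nil show ?case unfolding evalw.simps by (rule tree_aut_id)
next
  case (Cons l ls) show ?case unfolding evalw.simps by (rule tree_aut_comp[OF tree_aut_lett Cons])
qed

lemma evalw_words[simp]: "w \<in> words p \<Longrightarrow> evalw ws w \<in> words p"
  using tree_aut_evalw tree_aut_words by blast
lemma evalw_Nil[simp]: "evalw ws [] = []"
  using tree_aut_length[OF tree_aut_evalw words_Nil, of ws] by simp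

lemma evalw_append: "evalw (xs @ ys) = evalw ys \<circ> evalw xs"
  by (induction xs) auto

lemma bsum_append: "bsum (xs @ ys) i = bsum xs i + bsum ys i"
  by (induction xs rule: asum.induct) auto

lemma apow_modk: "w \<in> words p \<Longrightarrow> apow p (k mod p) w = apow p k w"
  by (rule apow_mod) auto

lemma sec_lem: "x < p \<Longrightarrow> w \<in> words p \<Longrightarrow>
   evalw ws (x # w) = ((x + asum ws) mod p) # evalw (secw x ws) w"
proof (induction ws arbitrary: x w)
  case Nil then show ?case by simp
next
  case (Cons l ls)
  show ?case
  proof (cases l)
    case (Inl k)
    have "(x + k) mod p < p" using p_pos by simp
    then show ?thesis using Cons Inl by (simp add: mod_add_left_eq add.assoc)
  next
    case (Inr n)
    show ?thesis
    proof (cases "x = 0")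
      case True then show ?thesis using Cons Inr by (simp add: bvec_eq bauto_Cons)
    next
      case False then show ?thesis using Cons Inr by (simp add: bvec_eq bauto_Cons apow_modk)
    qed
  qed
qed

lemma secw_length: "length (secw x ws) = length (filter (\<lambda>l. \<not> isl l) ws)"
  by (induction x ws rule: secw.induct) auto

lemma sum_secw: "(\<Sum>x<p. bsum (secw x ws) i) = bsum ws i"
proof (induction ws)
  case Nil then show ?case by simp
next
  case (Cons l ls)
  show ?case
  proof (cases l)
    case (Inl k)
    then show ?thesis using Cons sum_shift[OF p_pos, of "\<lambda>x. bsum (secw x ls) i" k] by simp
  next
    case (Inr n)
    have "(\<Sum>x<p. bsum (secw x (Inr n # ls)) i) = (\<Sum>x<p. (if x = 0 then n i else 0) + bsum (secw x ls) i)"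
      by (rule sum.cong) auto
    also have "\<dots> = n i + bsum ls i" using Cons p_pos by (simp add: sum.distrib)
    finally show ?thesis using Inr by simp
  qed
qed

end


lemma modsub: assumes "(p::nat) > 0" "j < p"
  shows "((x + k) mod p + p - (j + k) mod p) mod p = (x + p - j) mod p"
proof -
  have le1: "(j + k) mod p \<le> (x + k) mod p + p" using assms by (simp add: less_imp_le trans_le_add2)
  have le2: "j \<le> x + p" using assms by simp
  have "int (((x + k) mod p + p - (j + k) mod p) mod p)
        = ((int (x + k) mod int p - int (j + k) mod int p) + int p) mod int p"
    using le1 by (simp add: zmod_int of_nat_diff algebra_simps)
  also have "\<dots> = (int (x + k) mod int p - int (j + k) mod int p) mod int p" by simp
  also have "\<dots> = (int (x + k) - int (j + k)) mod int p" by (simp add: mod_diff_eq)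
  also have "\<dots> = ((int x - int j) + int p) mod int p" by simp
  also have "\<dots> = int ((x + p - j) mod p)" using le2 by (simp add: zmod_int of_nat_diff algebra_simps)
  finally show ?thesis by simp
qed

context ggs begin

lemma ehat_zero[simp]: "ehat (\<lambda>a. 0) y = 0" by (simp add: ehat_def)
lemma "(\<Sum>j<p. ehat (\<lambda>a. 0) ((x + p - j) mod p)) mod p = 0" by simp

lemma ehat_add: "ehat (\<lambda>i. a i + b i) y = ehat a y + ehat b y"
  by (simp add: ehat_def ev_add)

lemma bsum_Inr_fun: "bsum (Inr n # ls) = (\<lambda>i. n i + bsum ls i)" by auto

lemma rho: "x < p \<Longrightarrow>
  asum (secw x ws) mod p = (\<Sum>j<p. ehat (bsum (secw j ws)) ((x + p - j) mod p)) mod p"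
proof (induction ws arbitrary: x)
  case Nil
  have "ehat (bsum (secw j [])) y = 0" for j y by (simp add: ehat_def ev_def)
  then show ?case by simp
next
  case (Cons l ls)
  show ?case
  proof (cases l)
    case (Inl k)
    define x' where "x' = (x + k) mod p"
    have x': "x' < p" using p_pos by (simp add: x'_def)
    define H where "H j = ehat (bsum (secw j ls)) ((x' + p - j) mod p)" for j
    have "(\<Sum>j<p. ehat (bsum (secw j (l # ls))) ((x + p - j) mod p))
        = (\<Sum>j<p. H ((j + k) mod p))"
    proof (rule sum.cong)
      fix j assume "j \<in> {..<p}"
      then have "(x + p - j) mod p = (x' + p - (j + k) mod p) mod p"
        using modsub[OF p_pos, of j x k] by (simp add: x'_def)
      then show "ehat (bsum (secw j (l # ls))) ((x + p - j) mod p) = H ((j + k) mod p)"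
        using Inl by (simp add: H_def)
    qed simp
    also have "\<dots> = (\<Sum>j<p. H j)" by (rule sum_shift[OF p_pos])
    finally show ?thesis using Cons.IH[OF x'] Inl by (simp add: H_def x'_def)
  next
    case (Inr n)
    have bs: "bsum (secw j (Inr n # ls)) = (\<lambda>i. (if j = 0 then n i else 0) + bsum (secw j ls) i)" for j
      by auto
    have eh: "ehat (\<lambda>i. (if j = 0 then n i else 0) + b i) y = (if j = 0 then ehat n y else 0) + ehat b y"
      for j b y
      by (cases "j = 0") (simp_all add: ehat_add)
    have "(\<Sum>j<p. ehat (bsum (secw j (l # ls))) ((x + p - j) mod p))
        = (\<Sum>j<p. (if j = 0 then ehat n ((x + p - j) mod p) else 0)
                   + ehat (bsum (secw j ls)) ((x + p - j) mod p))"
      unfolding Inr bs eh ..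
    also have "\<dots> = ehat n x + (\<Sum>j<p. ehat (bsum (secw j ls)) ((x + p - j) mod p))"
      using p_pos Cons.prems by (simp add: sum.distrib)
    finally have F: "(\<Sum>j<p. ehat (bsum (secw j (l # ls))) ((x + p - j) mod p))
        = ehat n x + (\<Sum>j<p. ehat (bsum (secw j ls)) ((x + p - j) mod p))" .
    have "(\<Sum>j<p. ehat (bsum (secw j (l # ls))) ((x + p - j) mod p)) mod p
        = (ehat n x + (\<Sum>j<p. ehat (bsum (secw j ls)) ((x + p - j) mod p)) mod p) mod p"
      unfolding F by (rule mod_add_right_eq[symmetric])
    also have "\<dots> = (ehat n x + asum (secw x ls) mod p) mod p"
      using Cons.IH[OF Cons.prems] by simp
    also have "\<dots> = (ehat n x + asum (secw x ls)) mod p" by (rule mod_add_right_eq)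
    finally have "(\<Sum>j<p. ehat (bsum (secw j (l # ls))) ((x + p - j) mod p)) mod p
        = (ehat n x + asum (secw x ls)) mod p" .
    moreover have "asum (secw x (l # ls)) = ehat n x + asum (secw x ls)"
      using Inr by (simp add: ehat_def)
    ultimately show ?thesis by simp
  qed
qed

lemma allInr: "\<forall>l\<in>set ws. \<not> isl l \<Longrightarrow> x \<noteq> 0 \<Longrightarrow> asum (secw x ws) = ev (bsum ws) x"
proof (induction ws)
  case Nil
  have "bsum [] = (\<lambda>i. 0)" by auto
  then show ?case by simp
next
  case (Cons l ls)
  then obtain n where n: "l = Inr n" by (cases l) auto
  then show ?case using Cons by (simp add: bsum_Inr_fun ev_add)
qed

lemma evalw_single: "x < p \<Longrightarrow> evalw ws [x] = [(x + asum ws) mod p]"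
  using sec_lem[of x "[]" ws] by simp

lemma WL: "\<forall>w\<in>words p. evalw ws w = w \<Longrightarrow> \<forall>i<r. bsum ws i mod p = 0"
proof (induction ws rule: length_induct)
  case (1 ws)
  show ?case
  proof (cases "\<exists>l\<in>set ws. isl l")
    case True
    have sec_id: "\<forall>w\<in>words p. evalw (secw x ws) w = w" if x: "x < p" for x
    proof
      fix w assume w: "w \<in> words p"
      have "evalw ws (x # w) = x # w" using "1.prems" w x by simp
      then show "evalw (secw x ws) w = w" using sec_lem[OF x w, of ws] by simp
    qed
    have len: "length (secw x ws) < length ws" for x
      using True unfolding secw_length by (metis length_filter_less)
    have z: "bsum (secw x ws) i mod p = 0" if "x < p" "i < r" for x i
      using "1.IH" len sec_id that by blast
    show ?thesis
    proof (intro allI impI)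
      fix i assume i: "i < r"
      have "bsum ws i mod p = (\<Sum>x<p. bsum (secw x ws) i) mod p" by (simp add: sum_secw)
      also have "\<dots> = (\<Sum>x<p. bsum (secw x ws) i mod p) mod p" by (rule mod_sum_eq[symmetric])
      also have "\<dots> = 0" using z i by simp
      finally show "bsum ws i mod p = 0" .
    qed
  next
    case False
    have evz: "ev (bsum ws) j mod p = 0" if j: "j \<in> {1..<p}" for j
    proof -
      have jp: "j < p" "j \<noteq> 0" using j by auto
      have "evalw ws [j, 0] = [j, 0]" using "1.prems" jp by simp
      then have "evalw (secw j ws) [0] = [0]" using sec_lem[OF jp(1), of "[0]" ws] p_pos by simp
      then have "asum (secw j ws) mod p = 0" using evalw_single[OF p_pos] by simp
      then show ?thesis using allInr[OF _ jp(2), of ws] False by simp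
    qed
    let ?c = "\<lambda>i. bsum ws i mod p"
    have A: "\<forall>j\<in>{1..<p}. (\<Sum>i<r. ?c i * E i j) mod p = 0"
    proof
      fix j assume j: "j \<in> {1..<p}"
      have "(\<Sum>i<r. ?c i * E i j) mod p = ev ?c j mod p" by (simp add: ev_def)
      also have "\<dots> = ev (bsum ws) j mod p" by (rule ev_cong) simp
      finally show "(\<Sum>i<r. ?c i * E i j) mod p = 0" using evz[OF j] by simp
    qed
    have B: "\<forall>i<r. ?c i < p" using p_pos by simp
    have bm: "\<And>c. (\<forall>i<r. c i < p) \<Longrightarrow> (\<forall>j\<in>{1..<p}. (\<Sum>i<r. c i * E i j) mod p = 0)
        \<Longrightarrow> (\<forall>i<r. c i = 0)" using basis unfolding basis_matrix_def by blast
    have "\<forall>i<r. ?c i = 0" by (rule bm[OF B A])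
    then show ?thesis by simp
  qed
qed

end


lemma inv_arith: assumes "(a * b) mod p = (1::nat)" "z < p"
  shows "(b * (((a * z) mod p + k) mod p)) mod p = (z + b * k) mod p"
proof -
  have "(b * (((a * z) mod p + k) mod p)) mod p = (b * ((a * z) mod p + k)) mod p"
    by (rule mod_mult_right_eq)
  also have "\<dots> = (b * ((a * z) mod p) + b * k) mod p" by (simp add: algebra_simps)
  also have "\<dots> = ((b * ((a * z) mod p)) mod p + b * k) mod p" by (rule mod_add_left_eq[symmetric])
  also have "\<dots> = (z + b * k) mod p" using mulinv_cancel[OF assms] by simp
  finally show ?thesis .
qed

lemma dfun_apow: assumes "invpair p M M'" "w \<in> words p" "p > 0"
  shows "dfun p M (apow p k (dfun p M' w)) = apow p (M 0 * k) w"
proof (cases w)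
  case Nil then show ?thesis by simp
next
  case (Cons z v)
  have zv: "z < p" "v \<in> words p" using assms Cons by auto
  have inv0: "(M' 0 * M 0) mod p = 1" using assms(1) by (simp add: invpair_def mult.commute)
  have "dfun p M' w = ((M' 0 * z) mod p) # dfun p (\<lambda>i. M' (Suc i)) v" using Cons by simp
  moreover have "dfun p (\<lambda>i. M' (Suc i)) v \<in> words p" using dfun_words[OF assms(3) zv(2)] by blast
  ultimately have "apow p k (dfun p M' w) = (((M' 0 * z) mod p + k) mod p) # dfun p (\<lambda>i. M' (Suc i)) v"
    using assms(3) by simp
  then have "dfun p M (apow p k (dfun p M' w)) =
      ((M 0 * (((M' 0 * z) mod p + k) mod p)) mod p) # dfun p (\<lambda>i. M (Suc i)) (dfun p (\<lambda>i. M' (Suc i)) v)"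
    by simp
  also have "\<dots> = ((z + M 0 * k) mod p) # v"
    using inv_arith[OF inv0 zv(1)] dfun_dfun[OF invpair_Suc[OF invpair_sym[OF assms(1)]] zv(2)] by simp
  also have "\<dots> = apow p (M 0 * k) w" using Cons zv by simp
  finally show ?thesis .
qed

context ggs begin

fun shp :: "(nat \<Rightarrow> nat \<Rightarrow> nat) \<Rightarrow> nat list \<Rightarrow> nat list" where
  "shp F [] = []"
| "shp F (x # w) = (if x = 0 then 0 # shp (\<lambda>k. F (Suc k)) w else x # apow p (F 0 x) w)"

lemma sum_split0: "(p::nat) > 0 \<Longrightarrow> (\<Sum>x<p. f x) = f 0 + (\<Sum>x\<in>{1..<p}. (f x :: nat))"
proof -
  assume "p > 0"
  then have "{..<p} = insert 0 {1..<p}" by auto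
  then show ?thesis by simp
qed

lemma step:
  assumes H: "\<forall>w\<in>words p. evalw ws w = shp F w"
  shows "\<forall>x\<in>{1..<p}. F 0 x mod p = ev (bsum ws) x mod p"
    and "\<forall>w\<in>words p. evalw (secw 0 ws) w = shp (\<lambda>k. F (Suc k)) w"
    and "\<forall>i<r. bsum (secw 0 ws) i mod p = bsum ws i mod p"
proof -
  have sx: "evalw (secw x ws) w = apow p (F 0 x) w" if x: "x \<in> {1..<p}" and w: "w \<in> words p" for x w
  proof -
    have xp: "x < p" "x \<noteq> 0" using x by auto
    have "evalw ws (x # w) = x # apow p (F 0 x) w" using H w xp by simp
    then show ?thesis using sec_lem[OF xp(1) w, of ws] by simp
  qed
  have z: "bsum (secw x ws) i mod p = 0" if x: "x \<in> {1..<p}" and i: "i < r" for x i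
  proof -
    define ws' where "ws' = secw x ws @ [Inl (p - F 0 x mod p)]"
    have "\<forall>w\<in>words p. evalw ws' w = w"
    proof
      fix w assume w: "w \<in> words p"
      have "evalw ws' w = apow p (p - F 0 x mod p) (apow p (F 0 x) w)"
        using sx[OF x w] by (simp add: ws'_def evalw_append)
      also have "\<dots> = apow p (F 0 x + (p - F 0 x mod p)) w" using w by (simp add: apow_apow)
      also have "\<dots> = w" using w mod_compl[OF p_pos, of "F 0 x"] by (simp add: apow_zero add.commute)
      finally show "evalw ws' w = w" .
    qed
    then have "bsum ws' i mod p = 0" using WL i by blast
    then show ?thesis by (simp add: ws'_def bsum_append)
  qed
  show s3: "\<forall>i<r. bsum (secw 0 ws) i mod p = bsum ws i mod p"
  proof (intro allI impI)
    fix i assume i: "i < r"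
    have "(\<Sum>x\<in>{1..<p}. bsum (secw x ws) i) mod p = (\<Sum>x\<in>{1..<p}. bsum (secw x ws) i mod p) mod p"
      by (rule mod_sum_eq[symmetric])
    also have "\<dots> = 0" using z i by simp
    finally have S: "(\<Sum>x\<in>{1..<p}. bsum (secw x ws) i) mod p = 0" .
    have "bsum ws i = bsum (secw 0 ws) i + (\<Sum>x\<in>{1..<p}. bsum (secw x ws) i)"
      using sum_secw[of ws i] sum_split0[OF p_pos, of "\<lambda>x. bsum (secw x ws) i"] by simp
    then have "bsum ws i mod p = (bsum (secw 0 ws) i + (\<Sum>x\<in>{1..<p}. bsum (secw x ws) i) mod p) mod p"
      by (simp add: mod_add_right_eq)
    then show "bsum (secw 0 ws) i mod p = bsum ws i mod p" using S by simp
  qed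
  show "\<forall>w\<in>words p. evalw (secw 0 ws) w = shp (\<lambda>k. F (Suc k)) w"
  proof
    fix w assume w: "w \<in> words p"
    have "evalw ws (0 # w) = 0 # shp (\<lambda>k. F (Suc k)) w" using H w p_pos by simp
    then show "evalw (secw 0 ws) w = shp (\<lambda>k. F (Suc k)) w" using sec_lem[OF p_pos w, of ws] by simp
  qed
  show "\<forall>x\<in>{1..<p}. F 0 x mod p = ev (bsum ws) x mod p"
  proof
    fix x assume x: "x \<in> {1..<p}"
    have xp: "x < p" "x \<noteq> 0" using x by auto
    have "evalw (secw x ws) [0] = [F 0 x mod p]" using sx[OF x, of "[0]"] p_pos by simp
    then have "F 0 x mod p = asum (secw x ws) mod p" using evalw_single[OF p_pos, of "secw x ws"] by simp
    also have "\<dots> = (\<Sum>j<p. ehat (bsum (secw j ws)) ((x + p - j) mod p)) mod p" by (rule rho[OF xp(1)])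
    also have "\<dots> = (\<Sum>j<p. ehat (bsum (secw j ws)) ((x + p - j) mod p) mod p) mod p"
      by (rule mod_sum_eq[symmetric])
    also have "\<dots> = (ehat (bsum (secw 0 ws)) x mod p + (\<Sum>j\<in>{1..<p}. ehat (bsum (secw j ws)) ((x + p - j) mod p) mod p)) mod p"
      using sum_split0[OF p_pos, of "\<lambda>j. ehat (bsum (secw j ws)) ((x + p - j) mod p) mod p"] xp by simp
    also have "(\<Sum>j\<in>{1..<p}. ehat (bsum (secw j ws)) ((x + p - j) mod p) mod p) = 0"
    proof (rule sum.neutral, rule ballI)
      fix j assume j: "j \<in> {1..<p}"
      have "ehat (bsum (secw j ws)) ((x + p - j) mod p) mod p = ehat (\<lambda>i. 0) ((x + p - j) mod p) mod p"
        by (rule ehat_cong) (use z[OF j] in simp)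
      then show "ehat (bsum (secw j ws)) ((x + p - j) mod p) mod p = 0" by simp
    qed
    also have "ehat (bsum (secw 0 ws)) x mod p = ehat (bsum ws) x mod p"
      by (rule ehat_cong) (use s3 in simp)
    finally show "F 0 x mod p = ev (bsum ws) x mod p" using xp by (simp add: ehat_def)
  qed
qed

lemma core: "\<forall>w\<in>words p. evalw ws w = shp F w \<Longrightarrow> x \<in> {1..<p} \<Longrightarrow> F k x mod p = ev (bsum ws) x mod p"
proof (induction k arbitrary: ws F)
  case 0 then show ?case using step(1) by blast
next
  case (Suc k)
  have "(\<lambda>k. F (Suc k)) k x mod p = ev (bsum (secw 0 ws)) x mod p"
    using Suc.IH[OF step(2)[OF Suc.prems(1)] Suc.prems(2)] .
  also have "\<dots> = ev (bsum ws) x mod p" by (rule ev_cong) (use step(3)[OF Suc.prems(1)] in simp)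
  finally show ?case by simp
qed

lemma shp_bauto: "(\<And>k x. x \<in> {1..<p} \<Longrightarrow> F k x mod p = e x mod p) \<Longrightarrow> w \<in> words p \<Longrightarrow>
   shp F w = bauto p e w"
proof (induction w arbitrary: F)
  case (Cons x w)
  show ?case
  proof (cases "x = 0")
    case True
    then show ?thesis using Cons.IH[of "\<lambda>k. F (Suc k)"] Cons.prems by (simp add: bauto_Cons)
  next
    case False
    then have x1: "x \<in> {1..<p}" using Cons.prems by auto
    have wv: "w \<in> words p" using Cons.prems by simp
    have "apow p (F 0 x) w = apow p (e x) w" by (rule apow_mod[OF wv Cons.prems(1)[OF x1]])
    then show ?thesis using Cons.prems False by (simp add: bauto_Cons)
  qed
qed simp

lemma conj_shp: "invpair p M M' \<Longrightarrow> w \<in> words p \<Longrightarrow>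
  dfun p M (bauto p e (dfun p M' w)) = shp (\<lambda>k x. M (Suc k) * e ((M' k * x) mod p)) w"
proof (induction w arbitrary: M M')
  case Nil then show ?case by simp
next
  case (Cons x w)
  have xw: "x < p" "w \<in> words p" using Cons.prems by auto
  have inv0: "(M' 0 * M 0) mod p = 1" using Cons.prems(1) by (simp add: invpair_def mult.commute)
  have bk: "(M 0 * ((M' 0 * x) mod p)) mod p = x" by (rule mulinv_cancel[OF inv0 xw(1)])
  have dw: "dfun p (\<lambda>i. M' (Suc i)) w \<in> words p" using dfun_words[OF p_pos xw(2)] by blast
  have ip: "invpair p (\<lambda>i. M (Suc i)) (\<lambda>i. M' (Suc i))" by (rule invpair_Suc[OF Cons.prems(1)])
  show ?case
  proof (cases "x = 0")
    case True
    then show ?thesis using Cons.IH[OF ip xw(2)] dw p_pos by (simp add: bauto_Cons)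
  next
    case False
    let ?y = "(M' 0 * x) mod p"
    have y0: "?y \<noteq> 0"
    proof
      assume "?y = 0"
      then have "(M 0 * ?y) mod p = 0" by simp
      then show False using bk False by simp
    qed
    have yp: "?y < p" using p_pos by simp
    have "bauto p e (dfun p M' (x # w)) = ?y # apow p (e ?y) (dfun p (\<lambda>i. M' (Suc i)) w)"
      using y0 yp dw by (simp add: bauto_Cons)
    then have "dfun p M (bauto p e (dfun p M' (x # w))) =
       x # dfun p (\<lambda>i. M (Suc i)) (apow p (e ?y) (dfun p (\<lambda>i. M' (Suc i)) w))"
      using bk by simp
    also have "\<dots> = x # apow p (M (Suc 0) * e ?y) w"
      using dfun_apow[OF ip xw(2) p_pos] by simp
    finally show ?thesis using False by simp
  qed
qed

end


lemma modinv_ex: assumes "prime (p::nat)" "0 < a" "a < p" shows "\<exists>y. (a * y) mod p = 1"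
proof -
  have "\<not> p dvd a" using assms by (auto dest: dvd_imp_le)
  then have "coprime p a" by (rule prime_imp_coprime_nat[OF assms(1)])
  then have g: "gcd a p = 1" by (simp add: coprime_iff_gcd_eq_1 gcd.commute)
  obtain x y where "a * x = p * y + gcd a p" using bezout_nat[of a p] assms by auto
  then have "a * x = 1 + y * p" using g by simp
  then have "(a * x) mod p = (1 + y * p) mod p" by simp
  also have "\<dots> = 1 mod p" by (rule mod_mult_self1)
  also have "\<dots> = 1" using prime_gt_1_nat[OF assms(1)] by simp
  finally show ?thesis by blast
qed

lemma kappa_Cons: "y # u \<in> words p \<Longrightarrow> kappa p (Suc N) g (y # u) = y # kappa p N g u"
  by (simp add: kappa_def)

lemma kappa_words: "(\<And>v. v \<in> words p \<Longrightarrow> g v \<in> words p) \<Longrightarrow> w \<in> words p \<Longrightarrow> kappa p n g w \<in> words p"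
  by (auto simp: kappa_def)

lemma dmul_words: "p > 0 \<Longrightarrow> v \<in> words p \<Longrightarrow> dmul p k v \<in> words p"
  by (cases v) (auto simp: dmul_def)

lemma partprod_words: "p > 0 \<Longrightarrow> w \<in> words p \<Longrightarrow> partprod p m N w \<in> words p"
  by (induction N arbitrary: w) (auto intro!: kappa_words dmul_words)

lemma partprod_Nil: "partprod p m N [] = []"
  by (induction N) (auto simp: kappa_def dmul_def)

lemma partprod_peel: assumes "p > 0" "x # w \<in> words p"
  shows "partprod p m (Suc N) (x # w) = ((m 0 * x) mod p) # partprod p (\<lambda>i. m (Suc i)) N w"
proof (induction N)
  case 0 then show ?case using assms by (simp add: kappa_def dmul_def)
next
  case (Suc N)
  have ww: "w \<in> words p" using assms by simp
  have "((m 0 * x) mod p) # partprod p (\<lambda>i. m (Suc i)) N w \<in> words p"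
    using assms partprod_words[OF assms(1) ww] by simp
  then show ?case using Suc by (simp add: kappa_Cons)
qed

lemma partprod_dfun: "p > 0 \<Longrightarrow> w \<in> words p \<Longrightarrow> length w \<le> N \<Longrightarrow> partprod p m N w = dfun p m w"
proof (induction w arbitrary: m N)
  case Nil then show ?case by (simp add: partprod_Nil)
next
  case (Cons x w)
  then obtain N' where N: "N = Suc N'" by (cases N) auto
  have "partprod p m N (x # w) = ((m 0 * x) mod p) # partprod p (\<lambda>i. m (Suc i)) N' w"
    unfolding N by (rule partprod_peel[OF Cons.prems(1,2)])
  also have "\<dots> = dfun p m (x # w)" using Cons N by simp
  finally show ?case .
qed

lemma Dbar_dext: assumes "p > 0" "d \<in> Dbar p"
  shows "\<exists>m. (\<forall>i. m i \<in> {1..<p}) \<and> d = dext p m"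
proof -
  obtain m where m: "\<forall>i. m i \<in> {1..<p}" and td: "tree_aut p d"
    and conv: "\<forall>n. \<exists>N. \<forall>N'\<ge>N. \<forall>w\<in>words p. length w \<le> n \<longrightarrow> partprod p m N' w = d w"
    using assms(2) unfolding Dbar_def by blast
  have "d w = dext p m w" for w
  proof (cases "w \<in> words p")
    case True
    have "\<exists>N. \<forall>N'\<ge>N. \<forall>v\<in>words p. length v \<le> length w \<longrightarrow> partprod p m N' v = d v"
      using conv by (rule allE)
    then obtain N where N: "\<forall>N'\<ge>N. \<forall>v\<in>words p. length v \<le> length w \<longrightarrow> partprod p m N' v = d v"
      by (elim exE)
    have "partprod p m (max N (length w)) w = d w" using N True by simp
    moreover have "partprod p m (max N (length w)) w = dfun p m w"
      using partprod_dfun[OF assms(1) True] by simp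
    ultimately show ?thesis using True by (simp add: dext_def)
  next
    case False then show ?thesis using td by (simp add: dext_def tree_aut_out)
  qed
  then show ?thesis using m by blast
qed

context group begin
lemma cancel_l: "d \<in> carrier G \<Longrightarrow> z \<in> carrier G \<Longrightarrow> d \<otimes> (inv d \<otimes> z) = z"
  by (simp add: m_assoc[symmetric])
lemma conj_mult: "d \<in> carrier G \<Longrightarrow> x \<in> carrier G \<Longrightarrow> y \<in> carrier G \<Longrightarrow>
  inv d \<otimes> (x \<otimes> y) \<otimes> d = (inv d \<otimes> x \<otimes> d) \<otimes> (inv d \<otimes> y \<otimes> d)"
  by (simp add: m_assoc cancel_l)
lemma conj_inv: "d \<in> carrier G \<Longrightarrow> x \<in> carrier G \<Longrightarrow>
  inv (inv d \<otimes> x \<otimes> d) = inv d \<otimes> inv x \<otimes> d"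
  by (simp add: m_assoc inv_mult_group)
lemma conj_one: "d \<in> carrier G \<Longrightarrow> inv d \<otimes> \<one> \<otimes> d = \<one>"
  by simp
end

context ggs begin

lemma gen_a_carrier: "tree_aut p (gen_a p)" by (simp add: gen_a_apow tree_aut_apow p_pos)
lemma Bset_carrier: "b \<in> Bset p r E \<Longrightarrow> tree_aut p b"
  by (auto simp: Bset_def bvec_def tree_aut_bauto p_pos)

lemma gens_sub: "insert (gen_a p) (Bset p r E) \<subseteq> carrier (AutT p)"
  using gen_a_carrier Bset_carrier by auto

lemma G_sub: "subgroup (GGS p r E) (AutT p)"
  unfolding GGS_def by (rule group.generate_is_subgroup[OF AutT_group gens_sub])

lemma B_in_G: "b \<in> Bset p r E \<Longrightarrow> b \<in> GGS p r E"
  unfolding GGS_def by (rule generate.incl) simp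
lemma a_in_G: "gen_a p \<in> GGS p r E"
  unfolding GGS_def by (rule generate.incl) simp

lemma G_carrier: "g \<in> GGS p r E \<Longrightarrow> tree_aut p g"
  using subgroup.subset[OF G_sub] by auto

lemma apow_in_G: "apow p k \<in> GGS p r E"
proof (induction k)
  case 0
  have "apow p 0 = id"
    by (rule tree_aut_ext[OF tree_aut_apow[OF p_pos] tree_aut_id]) (simp add: apow_zero)
  then show ?case using subgroup.one_closed[OF G_sub] by (simp only: one_AutT)
next
  case (Suc k)
  have "apow p (Suc k) = gen_a p \<circ> apow p k"
    by (rule tree_aut_ext[OF tree_aut_apow[OF p_pos] tree_aut_comp[OF tree_aut_apow[OF p_pos] gen_a_carrier]])
       (simp add: gen_a_apow apow_apow)
  then show ?case using subgroup.m_closed[OF G_sub Suc a_in_G] by (simp only: mult_AutT)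
qed

fun invl :: "nat + (nat \<Rightarrow> nat) \<Rightarrow> nat + (nat \<Rightarrow> nat)" where
  "invl (Inl k) = Inl (p - k mod p)"
| "invl (Inr n) = Inr (\<lambda>i. p - n i mod p)"

lemma lett_inv: "w \<in> words p \<Longrightarrow> lett (invl l) (lett l w) = w"
proof (cases l)
  case (Inl k)
  assume w: "w \<in> words p"
  have "(k + (p - k mod p)) mod p = 0" using mod_compl[OF p_pos, of k] by (simp add: add.commute)
  then show ?thesis using Inl w by (simp add: apow_apow apow_zero)
next
  case (Inr n)
  assume w: "w \<in> words p"
  have "(ev n x mod p + ev (\<lambda>i. p - n i mod p) x mod p) mod p = 0" for x
  proof -
    have "(ev n x mod p + ev (\<lambda>i. p - n i mod p) x mod p) mod p = ev (\<lambda>i. n i + (p - n i mod p)) x mod p"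
      by (simp add: ev_add mod_add_eq)
    also have "\<dots> = ev (\<lambda>i. 0) x mod p"
      by (rule ev_cong) (use mod_compl[OF p_pos] in \<open>simp add: add.commute\<close>)
    finally show ?thesis by simp
  qed
  then show ?thesis using Inr w by (simp add: bvec_eq bauto_bauto)
qed

lemma gen_word: "h \<in> insert (gen_a p) (Bset p r E) \<Longrightarrow> \<exists>ws. h = evalw ws"
proof -
  assume "h \<in> insert (gen_a p) (Bset p r E)"
  then have "h = gen_a p \<or> h \<in> Bset p r E" by simp
  then show ?thesis
  proof (elim disjE)
    assume "h = gen_a p" then show ?thesis by (intro exI[of _ "[Inl 1]"]) (simp add: gen_a_apow)
  next
    assume "h \<in> Bset p r E"
    then obtain n where "h = bvec p r E n" by (auto simp: Bset_def)
    then show ?thesis by (intro exI[of _ "[Inr n]"]) simp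
  qed
qed

lemma G_words: "g \<in> GGS p r E \<Longrightarrow> \<exists>ws. g = evalw ws"
  unfolding GGS_def
proof (induction rule: generate.induct)
  case one
  then show ?case by (rule exI[of _ "[]"]) simp
next
  case (incl h)
  then show ?case by (rule gen_word)
next
  case (inv h)
  then obtain ws where ws: "h = evalw ws" using gen_word by blast
  have "inv\<^bsub>AutT p\<^esub> (evalw ws) = evalw (rev (map invl ws))"
  proof (rule inv_AutT[OF tree_aut_evalw tree_aut_evalw])
    fix w assume "w \<in> words p"
    then show "evalw (rev (map invl ws)) (evalw ws w) = w"
    proof (induction ws arbitrary: w)
      case (Cons l ls)
      have "evalw (rev (map invl (l # ls))) (evalw (l # ls) w)
          = lett (invl l) (evalw (rev (map invl ls)) (evalw ls (lett l w)))"
        by (simp add: evalw_append)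
      also have "\<dots> = w" using Cons tree_aut_words[OF tree_aut_lett] by (simp add: lett_inv)
      finally show ?case .
    qed simp
  qed
  then show ?case using ws by blast
next
  case (eng h1 h2)
  then obtain ws1 ws2 where "h1 = evalw ws1" "h2 = evalw ws2" by blast
  then show ?case by (intro exI[of _ "ws1 @ ws2"]) (simp add: evalw_append)
qed

lemma conj_to_B:
  assumes ip: "invpair p M M'" and b: "b \<in> Bset p r E" and inG: "dext p M \<circ> b \<circ> dext p M' \<in> GGS p r E"
  shows "dext p M \<circ> b \<circ> dext p M' \<in> Bset p r E"
proof -
  obtain n where bn: "b = bvec p r E n" using b by (auto simp: Bset_def)
  obtain ws where ws: "dext p M \<circ> b \<circ> dext p M' = evalw ws" using G_words[OF inG] by blast
  define e where "e j = ev n j mod p" for j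
  define F where "F k x = M (Suc k) * e ((M' k * x) mod p)" for k x
  have H: "\<forall>w\<in>words p. evalw ws w = shp F w"
  proof
    fix w assume w: "w \<in> words p"
    have "evalw ws w = dfun p M (bauto p e (dfun p M' w))"
      using w dfun_words[OF p_pos w] unfolding ws[symmetric] bn
      by (simp add: dext_def bvec_eq e_def[abs_def])
    also have "\<dots> = shp F w" unfolding F_def by (rule conj_shp[OF ip w])
    finally show "evalw ws w = shp F w" .
  qed
  define N where "N i = bsum ws i mod p" for i
  have FN: "F k x mod p = ev N x mod p" if "x \<in> {1..<p}" for k x
  proof -
    have "F k x mod p = ev (bsum ws) x mod p" by (rule core[OF H that])
    also have "\<dots> = ev N x mod p" by (rule ev_cong) (simp add: N_def)
    finally show ?thesis .
  qed
  have "evalw ws = bvec p r E N"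
  proof (rule tree_aut_ext[OF tree_aut_evalw])
    show "tree_aut p (bvec p r E N)" by (simp add: bvec_def tree_aut_bauto p_pos)
    fix w assume w: "w \<in> words p"
    have "shp F w = bauto p (\<lambda>j. ev N j mod p) w"
      by (rule shp_bauto[OF _ w]) (simp add: FN)
    then show "evalw ws w = bvec p r E N w" using H w by (simp add: bvec_eq)
  qed
  moreover have "bvec p r E N \<in> Bset p r E" unfolding Bset_def N_def using p_pos by auto
  ultimately show ?thesis using ws by simp
qed

end


context ggs begin

lemma dext_dext: "invpair p m m' \<Longrightarrow> dext p m' \<circ> dext p m = id"
proof
  fix w assume ip: "invpair p m m'"
  show "(dext p m' \<circ> dext p m) w = id w"
    by (cases "w \<in> words p") (simp_all add: dext_def dfun_words[OF p_pos] dfun_dfun[OF ip])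
qed

lemma Dbar_dm: assumes "d \<in> Dbar p" shows "\<exists>m m'. invpair p m m' \<and> d = dext p m"
proof -
  obtain m where m: "\<forall>i. m i \<in> {1..<p}" and d: "d = dext p m" using Dbar_dext[OF p_pos assms] by blast
  define m' where "m' i = (SOME y. (m i * y) mod p = 1)" for i
  have "(m i * m' i) mod p = 1" for i
  proof -
    have "\<exists>y. (m i * y) mod p = 1" using modinv_ex[OF p_prime] m by (metis atLeastLessThan_iff less_le_trans zero_less_one)
    then show ?thesis unfolding m'_def by (rule someI_ex)
  qed
  then have "invpair p m m'" by (simp add: invpair_def)
  then show ?thesis using d by blast
qed

lemma conj_apow: "invpair p m m' \<Longrightarrow> dext p m \<circ> apow p k \<circ> dext p m' = apow p (m 0 * k)"
proof (rule tree_aut_ext)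
  assume ip: "invpair p m m'"
  show "tree_aut p (dext p m \<circ> apow p k \<circ> dext p m')"
    by (rule tree_aut_comp[OF tree_aut_dext[OF p_pos invpair_sym[OF ip]]
          tree_aut_comp[OF tree_aut_apow[OF p_pos] tree_aut_dext[OF p_pos ip]]])
  show "tree_aut p (apow p (m 0 * k))" by (rule tree_aut_apow[OF p_pos])
  fix w assume w: "w \<in> words p"
  show "(dext p m \<circ> apow p k \<circ> dext p m') w = apow p (m 0 * k) w"
    using w dfun_apow[OF ip w p_pos] dfun_words[OF p_pos w] by (simp add: dext_def)
qed

lemma main:
  assumes dD: "d \<in> Dbar p"
  shows "normalises p d (GGS p r E) \<longleftrightarrow> normalises p d (Bset p r E)"
proof -
  interpret AG: group "AutT p" by (rule AutT_group)
  obtain m m' where ip: "invpair p m m'" and d: "d = dext p m" using Dbar_dm[OF dD] by blast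
  have ip': "invpair p m' m" by (rule invpair_sym[OF ip])
  have td: "tree_aut p d" unfolding d by (rule tree_aut_dext[OF p_pos ip])
  have td': "tree_aut p (dext p m')" by (rule tree_aut_dext[OF p_pos ip'])
  have invd: "inv\<^bsub>AutT p\<^esub> d = dext p m'"
    by (rule inv_AutT[OF td td']) (simp add: d dext_def dfun_words[OF p_pos] dfun_dfun[OF ip])
  have dd: "dext p m' \<circ> dext p m = id" by (rule dext_dext[OF ip])
  have dd': "dext p m \<circ> dext p m' = id" by (rule dext_dext[OF ip'])
  define C where "C h = inv\<^bsub>AutT p\<^esub> d \<otimes>\<^bsub>AutT p\<^esub> h \<otimes>\<^bsub>AutT p\<^esub> d" for h
  have Ceq: "C h = dext p m \<circ> h \<circ> dext p m'" for h
    unfolding C_def invd by (simp add: d comp_assoc)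
  have dc: "d \<in> carrier (AutT p)" using td by simp
  have Gc: "g \<in> carrier (AutT p)" if "g \<in> GGS p r E" for g using G_carrier[OF that] by simp
  have Bsub: "Bset p r E \<subseteq> GGS p r E" using B_in_G by blast
  have Ca: "C (gen_a p) = apow p (m 0)"
    using conj_apow[OF ip, of 1] by (simp add: Ceq gen_a_apow)
  have Ca': "C (apow p (m' 0)) = gen_a p"
  proof -
    have "C (apow p (m' 0)) = apow p (m 0 * m' 0)" using conj_apow[OF ip] by (simp add: Ceq)
    also have "\<dots> = apow p 1"
    proof (rule tree_aut_ext[OF tree_aut_apow[OF p_pos] tree_aut_apow[OF p_pos]])
      fix w assume w: "w \<in> words p"
      have "(m 0 * m' 0) mod p = 1 mod p" using ip p_gt1 by (simp add: invpair_def)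
      then show "apow p (m 0 * m' 0) w = apow p 1 w" by (rule apow_mod[OF w])
    qed
    finally show ?thesis by (simp add: gen_a_apow)
  qed
  have Cinv: "C (inv\<^bsub>AutT p\<^esub> h) = inv\<^bsub>AutT p\<^esub> (C h)" if "h \<in> carrier (AutT p)" for h
    unfolding C_def using AG.conj_inv[OF dc that] by simp
  have Cmult: "C (h1 \<otimes>\<^bsub>AutT p\<^esub> h2) = C h1 \<otimes>\<^bsub>AutT p\<^esub> C h2"
    if "h1 \<in> carrier (AutT p)" "h2 \<in> carrier (AutT p)" for h1 h2
    unfolding C_def by (rule AG.conj_mult[OF dc that])
  have Cone: "C \<one>\<^bsub>AutT p\<^esub> = \<one>\<^bsub>AutT p\<^esub>" unfolding C_def by (rule AG.conj_one[OF dc])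
  have Cback: "C (dext p m' \<circ> g \<circ> dext p m) = g" for g
    unfolding Ceq by (simp add: comp_assoc dd' , simp add: comp_assoc[symmetric] dd')
  have norm_iff: "normalises p d H \<longleftrightarrow> {C h | h. h \<in> H} = H" for H
    unfolding normalises_def C_def using dc by simp
  have gensc: "h \<in> carrier (AutT p)" if "h \<in> insert (gen_a p) (Bset p r E)" for h
    using gens_sub that by blast
  show ?thesis
  proof
    assume "normalises p d (GGS p r E)"
    then have NG: "{C h | h. h \<in> GGS p r E} = GGS p r E" by (simp add: norm_iff)
    have s1: "C h \<in> Bset p r E" if h: "h \<in> Bset p r E" for h
    proof -
      have "C h \<in> GGS p r E" using NG Bsub h by blast
      then show ?thesis unfolding Ceq by (rule conj_to_B[OF ip h])
    qed
    have s2: "\<exists>h\<in>Bset p r E. b = C h" if b: "b \<in> Bset p r E" for b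
    proof -
      obtain g where g: "g \<in> GGS p r E" "b = C g" using NG Bsub b by blast
      have hg: "dext p m' \<circ> b \<circ> dext p m = g" unfolding g(2) Ceq
        by (simp add: comp_assoc dd, simp add: comp_assoc[symmetric] dd)
      have "dext p m' \<circ> b \<circ> dext p m \<in> Bset p r E"
        by (rule conj_to_B[OF ip' b]) (simp add: hg g(1))
      moreover have "b = C (dext p m' \<circ> b \<circ> dext p m)" by (simp add: Cback)
      ultimately show ?thesis by blast
    qed
    have "{C h | h. h \<in> Bset p r E} = Bset p r E" using s1 s2 by blast
    then show "normalises p d (Bset p r E)" by (simp add: norm_iff)
  next
    assume "normalises p d (Bset p r E)"
    then have NB: "{C h | h. h \<in> Bset p r E} = Bset p r E" by (simp add: norm_iff)
    have CB: "C h \<in> Bset p r E" if "h \<in> Bset p r E" for h using NB that by blast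
    have gC: "C h \<in> GGS p r E" if h: "h \<in> insert (gen_a p) (Bset p r E)" for h
    proof -
      have "h = gen_a p \<or> h \<in> Bset p r E" using h by simp
      then show ?thesis
      proof
        assume "h = gen_a p" then show ?thesis using Ca apow_in_G by simp
      next
        assume "h \<in> Bset p r E" then show ?thesis using CB Bsub by blast
      qed
    qed
    have gS: "\<exists>h'\<in>GGS p r E. h = C h'" if h: "h \<in> insert (gen_a p) (Bset p r E)" for h
    proof -
      have "h = gen_a p \<or> h \<in> Bset p r E" using h by simp
      then show ?thesis
      proof
        assume "h = gen_a p" then show ?thesis using Ca' apow_in_G by metis
      next
        assume "h \<in> Bset p r E"
        then obtain h' where "h' \<in> Bset p r E" "h = C h'" using NB by blast
        then show ?thesis using Bsub by blast
      qed
    qed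
    have sub: "C g \<in> GGS p r E" if "g \<in> GGS p r E" for g
      using that unfolding GGS_def
    proof (induction rule: generate.induct)
      case one then show ?case using Cone generate.one by metis
    next
      case (incl h) then show ?case using gC unfolding GGS_def by blast
    next
      case (inv h)
      have "C (inv\<^bsub>AutT p\<^esub> h) = inv\<^bsub>AutT p\<^esub> (C h)" using Cinv gensc[OF inv] by blast
      moreover have "C h \<in> generate (AutT p) (insert (gen_a p) (Bset p r E))"
        using gC[OF inv] unfolding GGS_def .
      ultimately show ?case using subgroup.m_inv_closed[OF G_sub[unfolded GGS_def]] by simp
    next
      case (eng h1 h2)
      have c: "h1 \<in> carrier (AutT p)" "h2 \<in> carrier (AutT p)" using eng Gc unfolding GGS_def by auto
      show ?case unfolding Cmult[OF c] by (rule subgroup.m_closed[OF G_sub[unfolded GGS_def] eng.IH(1) eng.IH(2)])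
    qed
    have sup: "\<exists>h\<in>GGS p r E. g = C h" if "g \<in> GGS p r E" for g
      using that unfolding GGS_def
    proof (induction rule: generate.induct)
      case one then show ?case using Cone subgroup.one_closed[OF G_sub] unfolding GGS_def by metis
    next
      case (incl h) then show ?case using gS unfolding GGS_def by blast
    next
      case (inv h)
      obtain h' where h': "h' \<in> GGS p r E" "h = C h'" using gS[OF inv] by blast
      have "inv\<^bsub>AutT p\<^esub> h = C (inv\<^bsub>AutT p\<^esub> h')" using Cinv Gc[OF h'(1)] h'(2) by simp
      moreover have "inv\<^bsub>AutT p\<^esub> h' \<in> GGS p r E" using subgroup.m_inv_closed[OF G_sub h'(1)] .
      ultimately show ?case unfolding GGS_def by blast
    next
      case (eng h1 h2)
      obtain h1' h2' where h: "h1' \<in> GGS p r E" "h1 = C h1'" "h2' \<in> GGS p r E" "h2 = C h2'"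
        using eng unfolding GGS_def by blast
      have "h1 \<otimes>\<^bsub>AutT p\<^esub> h2 = C (h1' \<otimes>\<^bsub>AutT p\<^esub> h2')" using Cmult Gc h by simp
      moreover have "h1' \<otimes>\<^bsub>AutT p\<^esub> h2' \<in> GGS p r E" using subgroup.m_closed[OF G_sub h(1) h(3)] .
      ultimately show ?case unfolding GGS_def by blast
    qed
    have "{C h | h. h \<in> GGS p r E} = GGS p r E" using sub sup by blast
    then show "normalises p d (GGS p r E)" by (simp add: norm_iff)
  qed
qed

end

theorem mainTheorem17:
  fixes p r :: nat and E :: "nat \<Rightarrow> nat \<Rightarrow> nat"
  assumes "prime (p::nat)" and "odd p" and "r \<ge> 1"
    and "basis_matrix p r E"
    and "row_space p r E \<noteq> const_space p"
  shows "{d \<in> Dbar p. normalises p d (GGS p r E)} = {d \<in> Dbar p. normalises p d (Bset p r E)}"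
proof -
  interpret ggs p r E using assms(1,4) by unfold_locales
  show ?thesis using main by blast
qed


end
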